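(* Let $\lambda=[2,2,2,2]$ and $\mu=[4,1,1,1,1,1,1,1,1]$ (one entry $4$ and eight entries $1$). Then $\lambda$ stably embeds into $\mu$ (indeed $\lambda\times\nu\hookrightarrow\mu\times\nu$ for $\nu=[2,1,1]$), but $\mu$ does not supermajorize $\lambda$ and $\lambda$ does not embed into $\mu$.
   Context: Partitions are finite nonincreasing sequences of positive integers. The product $\lambda\times\nu$ is the partition of all products $\lambda_i\nu_j$, reordered nonincreasingly. $\lambda=[\lambda_1,\ldots,\lambda_m]$ embeds into $\mu=[\mu_1,\ldots,\mu_n]$, written $\lambda\hookrightarrow\mu$, if there is a map $\varphi:\{1,\ldots,m\}\to\{1,\ldots,n\}$ with $\sum_{i\in\varphi^{-1}(j)}\lambda_i\le\mu_j$ for all $j$. $\lambda$ stably embeds into $\mu$ if there is a partition $\nu$ with $\lambda\times\nu\hookrightarrow\mu\times\nu$. $\mu$ supermajorizes $\lambda$ (written $\lambda\preccurlyeq_S\mu$) if for every $x\in\mathbb N$, $\sum_{\lambda_i\ge x}\lambda_i\le\sum_{\mu_j\ge x}\mu_j$. *)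

theory Defs
  imports Main
begin

definition is_partition :: "nat list \<Rightarrow> bool" where
  "is_partition l \<longleftrightarrow> sorted_wrt (\<ge>) l \<and> (\<forall>a\<in>set l. 0 < a)"

definition pprod :: "nat list \<Rightarrow> nat list \<Rightarrow> nat list" where
  "pprod l n = rev (sort [a * b. a \<leftarrow> l, b \<leftarrow> n])"

definition embeds :: "nat list \<Rightarrow> nat list \<Rightarrow> bool" where
  "embeds l m \<longleftrightarrow> (\<exists>\<phi> :: nat \<Rightarrow> nat.
      (\<forall>i < length l. \<phi> i < length m) \<and>
      (\<forall>j < length m. (\<Sum>i \<in> {i. i < length l \<and> \<phi> i = j}. l ! i) \<le> m ! j))"

definition stably_embeds :: "nat list \<Rightarrow> nat list \<Rightarrow> bool" where
  "stably_embeds l m \<longleftrightarrow> (\<exists>\<nu>. is_partition \<nu> \<and> \<nu> \<noteq> [] \<and> embeds (pprod l \<nu>) (pprod m \<nu>))"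

definition supermaj :: "nat list \<Rightarrow> nat list \<Rightarrow> bool" where
  "supermaj l m \<longleftrightarrow> (\<forall>x::nat. sum_list (filter (\<lambda>a. x \<le> a) l) \<le> sum_list (filter (\<lambda>a. x \<le> a) m))"

end

theory Submission
  imports Defs
begin

lemma pp1: "pprod [2,2,2,2] [2,1,1] = [4,4,4,4,2,2,2,2,2,2,2,2]"
  by (simp add: pprod_def)

lemma pp2: "pprod [4,1,1,1,1,1,1,1,1] [2,1,1] =
  [8,4,4,2,2,2,2,2,2,2,2,1,1,1,1,1,1,1,1,1,1,1,1,1,1,1,1]"
  by (simp add: pprod_def)

lemma sum_conv: "(\<Sum>i \<in> {i. i < n \<and> f i = j}. (l::nat list) ! i) = (\<Sum>i<n. if f i = j then l ! i else 0)"
proof -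
  have "{i. i < n \<and> f i = j} = {..<n} \<inter> {i. f i = j}" by auto
  then show ?thesis by (simp add: sum.inter_restrict)
qed

lemma emb: "embeds [4,4,4,4,2,2,2,2,2,2,2,2]
  [8,4,4,2,2,2,2,2,2,2,2,1,1,1,1,1,1,1,1,1,1,1,1,1,1,1,1]"
  unfolding embeds_def
proof (intro exI[of _ "\<lambda>i. if i < 2 then 0 else i - 1"] conjI allI impI)
  fix i assume "i < length [4,4,4,4,2,2,2,2,2,2,2,2::nat]"
  then show "(if i < 2 then 0 else i - 1) < length [8,4,4,2,2,2,2,2,2,2,2,1,1,1,1,1,1,1,1,1,1,1,1,1,1,1,1::nat]" by simp linarith
next
  fix j assume j: "j < length [8,4,4,2,2,2,2,2,2,2,2,1,1,1,1,1,1,1,1,1,1,1,1,1,1,1,1::nat]"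
  show "(\<Sum>i \<in> {i. i < length [4,4,4,4,2,2,2,2,2,2,2,2::nat] \<and> (if i < 2 then 0 else i - 1) = j}. [4,4,4,4,2,2,2,2,2,2,2,2::nat] ! i)
     \<le> [8,4,4,2,2,2,2,2,2,2,2,1,1,1,1,1,1,1,1,1,1,1,1,1,1,1,1::nat] ! j"
    unfolding sum_conv using j
    by (simp add: lessThan_nat_numeral less_Suc_eq numeral_eq_Suc)
qed

lemma notemb: "\<not> embeds [2,2,2,2] [4,1,1,1,1,1,1,1,1]"
proof
  assume "embeds [2,2,2,2] [4,1,1,1,1,1,1,1,1]"
  then obtain f :: "nat \<Rightarrow> nat" where f1': "\<forall>i<length [2,2,2,2::nat]. f i < length [4,1,1,1,1,1,1,1,1::nat]"
    and f2': "\<forall>j<length [4,1,1,1,1,1,1,1,1::nat]. (\<Sum>i<length [2,2,2,2::nat]. if f i = j then [2,2,2,2::nat] ! i else 0) \<le> [4,1,1,1,1,1,1,1,1::nat] ! j"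
    unfolding embeds_def sum_conv by blast
  have f1: "\<forall>i<4. f i < 9" using f1' by (simp add: numeral_eq_Suc)
  have f2: "\<forall>j<9. (\<Sum>i<4. if f i = j then [2,2,2,2::nat] ! i else 0) \<le> [4,1,1,1,1,1,1,1,1::nat] ! j"
    proof -
    have l1: "length [2,2,2,2::nat] = 4" and l2: "length [4,1,1,1,1,1,1,1,1::nat] = 9" by simp_all
    show ?thesis using f2' unfolding l1 l2 .
  qed
  have z: "f i = 0" if "i < 4" for i
  proof (rule ccontr)
    assume ne: "f i \<noteq> 0"
    have "f i < 9" using f1 that by auto
    hence le: "(\<Sum>k<4. if f k = f i then [2,2,2,2::nat] ! k else 0) \<le> [4,1,1,1,1,1,1,1,1::nat] ! f i"
      using f2 by auto
    have "(if f i = f i then [2,2,2,2::nat] ! i else 0) \<le> (\<Sum>k<4. if f k = f i then [2,2,2,2::nat] ! k else 0)"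
      by (rule member_le_sum[where f="\<lambda>k. if f k = f i then [2,2,2,2::nat] ! k else 0"]) (use that in auto)
    moreover have "[2,2,2,2::nat] ! i = 2" using that by (auto simp: less_Suc_eq numeral_eq_Suc)
    moreover have "[4,1,1,1,1,1,1,1,1::nat] ! f i = 1" using ne \<open>f i < 9\<close>
      by (auto simp: less_Suc_eq numeral_eq_Suc)
    ultimately show False using le by simp
  qed
  have "(\<Sum>i<4. if f i = 0 then [2,2,2,2::nat] ! i else 0) \<le> 4" using f2[rule_format, of 0] by simp
  then show False using z by (simp add: lessThan_nat_numeral)
qed

theorem mainTheorem5:
  defines "lam \<equiv> [2,2,2,2] :: nat list"
      and "mu \<equiv> [4,1,1,1,1,1,1,1,1] :: nat list"
  shows "is_partition lam \<and> is_partition mu \<and>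
         stably_embeds lam mu \<and>
         embeds (pprod lam [2,1,1]) (pprod mu [2,1,1]) \<and>
         \<not> supermaj lam mu \<and> \<not> embeds lam mu"
proof -
  have e: "embeds (pprod lam [2,1,1]) (pprod mu [2,1,1])"
    unfolding lam_def mu_def pp1 pp2 by (rule emb)
  have p: "is_partition [2,1,1::nat]" by (simp add: is_partition_def)
  have s: "\<not> supermaj lam mu"
    unfolding supermaj_def lam_def mu_def by (auto intro: exI[of _ 2])
  show ?thesis
    using e p s notemb unfolding stably_embeds_def
    by (auto intro!: exI[of _ "[2,1,1]"] simp: is_partition_def lam_def mu_def)
qed

end
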